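(* Let $\mathcal{U}$ be a UEC-representative and let $\mathcal{D}$ be a maximal DAG in the UEC of $\mathcal{U}$. Then for nodes $v,x,w$, the path $(v,x,w)$ is a v-structure $v\to x\leftarrow w$ in $\mathcal{D}$ if and only if there exist cliques $C_1,C_2\in\mathcal{E}^\mathcal{U}$ with $v,x\in C_1$, $w\notin C_1$, $w,x\in C_2$, $v\notin C_2$, and every clique in $\mathcal{E}^\mathcal{U}$ containing $v$ or $w$ also contains $x$.
   Context: For a DAG $\mathcal{D}$, a trek is a path with no repeated vertices and no collider; the unconditional dependence graph $\mathcal{U}^\mathcal{D}$ has an edge between distinct $v,w$ iff there is a trek between them. A UEC-representative is an undirected graph $\mathcal{U}$ with $\mathcal{U}=\mathcal{U}^\mathcal{D}$ for some DAG $\mathcal{D}$ on the same vertex set; the UEC of $\mathcal{U}$ is $\{\mathcal{D}:\mathcal{U}^\mathcal{D}=\mathcal{U}\}$. A DAG $\mathcal{D}$ in this UEC is maximal if every DAG obtained from $\mathcal{D}$ by adding one edge is not in the UEC. An edge clique cover is a collection of cliques covering every vertex and edge; $\mathcal{E}^\mathcal{U}$ denotes the unique minimum-cardinality edge clique cover of the UEC-representative $\mathcal{U}$ (it equals $\{\mathrm{ne}_\mathcal{U}[m]:m\in M\}$ for any maximum independent set $M$, with $\mathrm{ne}_\mathcal{U}[m]$ the closed neighborhood). A v-structure is $v\to x\leftarrow w$ with $v,w$ nonadjacent. *)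

theory Defs
  imports Main
begin

text \<open>Graphs on an explicit finite vertex set V. A directed graph is an edge
relation D (pairs (a,b) meaning a -> b); an undirected graph is a symmetric
relation U.\<close>

definition is_dag :: "'a set \<Rightarrow> 'a rel \<Rightarrow> bool" where
  "is_dag V D \<longleftrightarrow> finite V \<and> D \<subseteq> V \<times> V \<and> acyclic D"

definition adjD :: "'a rel \<Rightarrow> 'a \<Rightarrow> 'a \<Rightarrow> bool" where
  "adjD D a b \<longleftrightarrow> (a, b) \<in> D \<or> (b, a) \<in> D"

definition is_trek :: "'a rel \<Rightarrow> 'a list \<Rightarrow> bool" where
  "is_trek D p \<longleftrightarrow> p \<noteq> [] \<and> distinct p
     \<and> (\<forall>i. Suc i < length p \<longrightarrow> adjD D (p ! i) (p ! Suc i))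
     \<and> (\<forall>i. Suc (Suc i) < length p \<longrightarrow>
            \<not> ((p ! i, p ! Suc i) \<in> D \<and> (p ! Suc (Suc i), p ! Suc i) \<in> D))"

definition trek_between :: "'a rel \<Rightarrow> 'a \<Rightarrow> 'a \<Rightarrow> bool" where
  "trek_between D v w \<longleftrightarrow> (\<exists>p. is_trek D p \<and> hd p = v \<and> last p = w)"

definition udg :: "'a set \<Rightarrow> 'a rel \<Rightarrow> 'a rel" where
  "udg V D = {(v, w). v \<in> V \<and> w \<in> V \<and> v \<noteq> w \<and> trek_between D v w}"

definition uec_rep :: "'a set \<Rightarrow> 'a rel \<Rightarrow> bool" where
  "uec_rep V U \<longleftrightarrow> (\<exists>D. is_dag V D \<and> udg V D = U)"

definition in_uec :: "'a set \<Rightarrow> 'a rel \<Rightarrow> 'a rel \<Rightarrow> bool" where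
  "in_uec V U D \<longleftrightarrow> is_dag V D \<and> udg V D = U"

definition maximal_in_uec :: "'a set \<Rightarrow> 'a rel \<Rightarrow> 'a rel \<Rightarrow> bool" where
  "maximal_in_uec V U D \<longleftrightarrow> in_uec V U D \<and>
     (\<forall>a b. a \<in> V \<longrightarrow> b \<in> V \<longrightarrow> a \<noteq> b \<longrightarrow> (a, b) \<notin> D \<longrightarrow>
        is_dag V (insert (a, b) D) \<longrightarrow> \<not> in_uec V U (insert (a, b) D))"

definition is_clique :: "'a set \<Rightarrow> 'a rel \<Rightarrow> 'a set \<Rightarrow> bool" where
  "is_clique V U C \<longleftrightarrow> C \<subseteq> V \<and> (\<forall>a\<in>C. \<forall>b\<in>C. a \<noteq> b \<longrightarrow> (a, b) \<in> U)"

definition edge_clique_cover :: "'a set \<Rightarrow> 'a rel \<Rightarrow> 'a set set \<Rightarrow> bool" where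
  "edge_clique_cover V U E \<longleftrightarrow> (\<forall>C\<in>E. is_clique V U C)
     \<and> (\<forall>v\<in>V. \<exists>C\<in>E. v \<in> C)
     \<and> (\<forall>(a, b)\<in>U. \<exists>C\<in>E. a \<in> C \<and> b \<in> C)"

definition min_edge_clique_cover :: "'a set \<Rightarrow> 'a rel \<Rightarrow> 'a set set \<Rightarrow> bool" where
  "min_edge_clique_cover V U E \<longleftrightarrow> finite E \<and> edge_clique_cover V U E
     \<and> (\<forall>E'. finite E' \<longrightarrow> edge_clique_cover V U E' \<longrightarrow> card E \<le> card E')"

definition v_structure :: "'a rel \<Rightarrow> 'a \<Rightarrow> 'a \<Rightarrow> 'a \<Rightarrow> bool" where
  "v_structure D v x w \<longleftrightarrow> v \<noteq> w \<and> (v, x) \<in> D \<and> (w, x) \<in> D \<and> \<not> adjD D v w"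

end

theory Submission
  imports Defs
begin

definition colfree :: "'a rel \<Rightarrow> 'a list \<Rightarrow> bool" where
 "colfree D p \<longleftrightarrow> (\<forall>i. Suc i < length p \<longrightarrow> adjD D (p!i) (p!Suc i)) \<and>
   (\<forall>i. Suc (Suc i) < length p \<longrightarrow> \<not>((p!i, p!Suc i)\<in>D \<and> (p!Suc(Suc i), p!Suc i)\<in>D))"

lemma trek_cf: "is_trek D p \<longleftrightarrow> p\<noteq>[] \<and> distinct p \<and> colfree D p"
  unfolding is_trek_def colfree_def by auto

lemma all_nat_split: "(\<forall>i::nat. Q i) \<longleftrightarrow> Q 0 \<and> (\<forall>i. Q (Suc i))"
  by (metis not0_implies_Suc)

lemma cf_single[simp]: "colfree D [a]" by (simp add: colfree_def)

lemma cf_cons2: "colfree D (a#b#r) \<longleftrightarrow> adjD D a b \<and> (r \<noteq> [] \<longrightarrow> \<not>((a,b)\<in>D \<and> (hd r,b)\<in>D)) \<and> colfree D (b#r)"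
proof -
  have 1: "(\<forall>i. Suc i < length (a#b#r) \<longrightarrow> adjD D ((a#b#r)!i) ((a#b#r)!Suc i)) \<longleftrightarrow>
     adjD D a b \<and> (\<forall>i. Suc i < length (b#r) \<longrightarrow> adjD D ((b#r)!i) ((b#r)!Suc i))"
    by (subst all_nat_split) simp
  have 2: "(\<forall>i. Suc (Suc i) < length (a#b#r) \<longrightarrow> \<not>(((a#b#r)!i, (a#b#r)!Suc i)\<in>D \<and> ((a#b#r)!Suc(Suc i), (a#b#r)!Suc i)\<in>D))
     \<longleftrightarrow> (r \<noteq> [] \<longrightarrow> \<not>((a,b)\<in>D \<and> (hd r,b)\<in>D)) \<and>
     (\<forall>i. Suc (Suc i) < length (b#r) \<longrightarrow> \<not>(((b#r)!i, (b#r)!Suc i)\<in>D \<and> ((b#r)!Suc(Suc i), (b#r)!Suc i)\<in>D))"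
    by (subst all_nat_split) (cases r; simp)
  show ?thesis unfolding colfree_def 1 2 by blast
qed

lemma cf_tl: "colfree D (a#q) \<Longrightarrow> q \<noteq> [] \<Longrightarrow> colfree D q"
  by (cases q) (auto simp: cf_cons2)

lemma cf_prefix: "colfree D (xs@ys) \<Longrightarrow> xs\<noteq>[] \<Longrightarrow> colfree D xs"
proof (induction xs rule: induct_list012)
  case (3 x y zs)
  then show ?case by (cases zs) (auto simp: cf_cons2)
qed auto

lemma cf_suffix: "colfree D (xs@ys) \<Longrightarrow> ys\<noteq>[] \<Longrightarrow> colfree D ys"
  by (induction xs) (auto dest: cf_tl)

lemma cf_append: "colfree D p \<Longrightarrow> p\<noteq>[] \<Longrightarrow> (last p, e)\<in>D \<Longrightarrow> (e, last p)\<notin>D \<Longrightarrow> colfree D (p@[e])"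
proof (induction p rule: induct_list012)
  case (2 x)
  then show ?case by (simp add: cf_cons2 adjD_def)
next
  case (3 x y zs)
  then show ?case by (cases zs) (auto simp: cf_cons2)
qed auto

lemma cf_prepend: "colfree D p \<Longrightarrow> p\<noteq>[] \<Longrightarrow> (hd p, y)\<in>D \<Longrightarrow> (y, hd p)\<notin>D \<Longrightarrow> colfree D (y#p)"
  by (cases p) (auto simp: cf_cons2 adjD_def)

lemma acyc_asym: "acyclic D \<Longrightarrow> (a,b)\<in>D \<Longrightarrow> (b,a)\<notin>D"
  by (meson acyclic_def r_into_trancl trancl_into_trancl)

lemma trek_refl: "trek_between D a a"
  unfolding trek_between_def by (rule exI[of _ "[a]"]) (simp add: trek_cf)

lemma trek_fwd: "(d,e)\<in>D\<^sup>* \<Longrightarrow> acyclic D \<Longrightarrow> trek_between D a d \<Longrightarrow> trek_between D a e"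
proof (induction rule: rtrancl_induct)
  case (step y e)
  then obtain p where p: "is_trek D p" "hd p = a" "last p = y" unfolding trek_between_def by blast
  show ?case
  proof (cases "e \<in> set p")
    case True
    then obtain xs ys where s: "p = xs @ e # ys" by (meson split_list)
    have "is_trek D (xs@[e])" using p(1) unfolding s trek_cf
      by (auto intro: cf_prefix[of D "xs@[e]" ys])
    moreover have "hd (xs@[e]) = a" using p(2) s by (cases xs) auto
    ultimately show ?thesis unfolding trek_between_def by force
  next
    case False
    have "is_trek D (p@[e])" using p step False cf_append[of D p e] acyc_asym[of D y e]
      unfolding trek_cf by auto
    moreover have "hd (p@[e]) = a" using p by (auto simp: trek_cf)
    ultimately show ?thesis unfolding trek_between_def by force
  qed
qed

lemma trek_bwd: "(c,a)\<in>D\<^sup>* \<Longrightarrow> acyclic D \<Longrightarrow> trek_between D c b \<Longrightarrow> trek_between D a b"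
proof (induction rule: rtrancl_induct)
  case (step y e)
  then obtain p where p: "is_trek D p" "hd p = y" "last p = b" unfolding trek_between_def by blast
  show ?case
  proof (cases "e \<in> set p")
    case True
    then obtain xs ys where s: "p = xs @ e # ys" by (meson split_list)
    have "is_trek D (e#ys)" using p(1) unfolding s trek_cf
      by (auto intro: cf_suffix[of D xs "e#ys"])
    moreover have "last (e#ys) = b" using p(3) s by simp
    ultimately show ?thesis unfolding trek_between_def by force
  next
    case False
    have "is_trek D (e#p)" using p step False cf_prepend[of D p e] acyc_asym[of D y e]
      unfolding trek_cf by auto
    moreover have "last (e#p) = b" using p by (auto simp: trek_cf)
    ultimately show ?thesis unfolding trek_between_def by force
  qed
qed

lemma cf_anc: "colfree D p \<Longrightarrow> p\<noteq>[] \<Longrightarrow> (\<exists>c. (c,hd p)\<in>D\<^sup>* \<and> (c,last p)\<in>D\<^sup>*) \<and>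
   (\<forall>y. (y,hd p)\<in>D \<longrightarrow> colfree D (y#p) \<longrightarrow> (hd p, last p)\<in>D\<^sup>*)"
proof (induction p rule: induct_list012)
  case (3 x y zs)
  have cf: "adjD D x y" "zs \<noteq> [] \<longrightarrow> \<not>((x,y)\<in>D \<and> (hd zs,y)\<in>D)" "colfree D (y#zs)"
    using "3.prems" by (auto simp: cf_cons2)
  have IH: "(\<exists>c. (c,y)\<in>D\<^sup>* \<and> (c,last (y#zs))\<in>D\<^sup>*) \<and>
   (\<forall>y'. (y',y)\<in>D \<longrightarrow> colfree D (y'#y#zs) \<longrightarrow> (y, last (y#zs))\<in>D\<^sup>*)"
    using "3.IH"(2) cf(3) by simp
  show ?case
  proof (cases "(x,y)\<in>D")
    case True
    then have "(y, last (y#zs))\<in>D\<^sup>*" using IH "3.prems"(1) by blast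
    then have "(x, last (x#y#zs))\<in>D\<^sup>*" using True by (simp add: converse_rtrancl_into_rtrancl)
    then show ?thesis by auto
  next
    case False
    then have yx: "(y,x)\<in>D" using cf(1) by (auto simp: adjD_def)
    obtain c where "(c,y)\<in>D\<^sup>*" "(c,last (y#zs))\<in>D\<^sup>*" using IH by blast
    then have "(c,x)\<in>D\<^sup>*" "(c,last (x#y#zs))\<in>D\<^sup>*" using yx by auto
    moreover have "\<forall>y'. (y',x)\<in>D \<longrightarrow> colfree D (y'#x#y#zs) \<longrightarrow> False"
      using yx by (auto simp: cf_cons2)
    ultimately show ?thesis by auto
  qed
qed auto

lemma trek_iff: "acyclic D \<Longrightarrow> trek_between D a b \<longleftrightarrow> (\<exists>c. (c,a)\<in>D\<^sup>* \<and> (c,b)\<in>D\<^sup>*)"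
proof
  assume "trek_between D a b"
  then obtain p where "is_trek D p" "hd p = a" "last p = b" unfolding trek_between_def by blast
  then show "\<exists>c. (c,a)\<in>D\<^sup>* \<and> (c,b)\<in>D\<^sup>*" using cf_anc[of D p] by (auto simp: trek_cf)
next
  assume "acyclic D" "\<exists>c. (c,a)\<in>D\<^sup>* \<and> (c,b)\<in>D\<^sup>*"
  then obtain c where c: "(c,a)\<in>D\<^sup>*" "(c,b)\<in>D\<^sup>*" by blast
  have "trek_between D c b" using trek_fwd[OF c(2) \<open>acyclic D\<close> trek_refl] .
  then show "trek_between D a b" using trek_bwd[OF c(1) \<open>acyclic D\<close>] by blast
qed


lemma src_exists:
  assumes "finite D" "acyclic D" shows "\<exists>s. (s,c)\<in>D\<^sup>* \<and> (\<forall>z. (z,s)\<notin>D)"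
proof -
  have "wf D" using finite_acyclic_wf assms by blast
  obtain z where z: "z \<in> {s. (s,c)\<in>D\<^sup>*}" "\<And>y. (y,z)\<in>D \<Longrightarrow> y \<notin> {s. (s,c)\<in>D\<^sup>*}"
    using wfE_min[OF \<open>wf D\<close>, of c "{s. (s,c)\<in>D\<^sup>*}"] by blast
  have "(y,z)\<notin>D" for y
  proof
    assume "(y,z)\<in>D"
    moreover have "(z,c)\<in>D\<^sup>*" using z(1) by simp
    ultimately have "(y,c)\<in>D\<^sup>*" by (rule converse_rtrancl_into_rtrancl)
    then show False using z(2)[OF \<open>(y,z)\<in>D\<close>] by simp
  qed
  then show ?thesis using z(1) by blast
qed

lemma src_anc: assumes "\<forall>z. (z,s)\<notin>D" "(c,s)\<in>D\<^sup>*" shows "c = s"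
  by (rule rtranclE[OF assms(2)]) (use assms(1) in auto)

lemma udg_char: assumes "acyclic D" shows "(p,q)\<in>udg V D \<longleftrightarrow> p\<in>V \<and> q\<in>V \<and> p\<noteq>q \<and> (\<exists>c. (c,p)\<in>D\<^sup>* \<and> (c,q)\<in>D\<^sup>*)"
  unfolding udg_def trek_iff[OF assms] by simp

lemma dag_finite: assumes "is_dag V D" shows "finite D"
proof -
  have h: "finite (V\<times>V)" "D \<subseteq> V\<times>V" using assms unfolding is_dag_def by auto
  show ?thesis using finite_subset[OF h(2) h(1)] .
qed

lemma acyc_rt_antisym: "acyclic D \<Longrightarrow> (a,b)\<in>D\<^sup>* \<Longrightarrow> (b,a)\<in>D\<^sup>* \<Longrightarrow> a = b"
proof (rule ccontr)
  assume a: "acyclic D" "(a,b)\<in>D\<^sup>*" "(b,a)\<in>D\<^sup>*" "a \<noteq> b"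
  have "a = b \<or> (a\<noteq>b \<and> (a,b)\<in>D\<^sup>+)" by (rule rtranclD[OF a(2)])
  then have "(a,b)\<in>D\<^sup>+" using a(4) by blast
  then have "(a,a)\<in>D\<^sup>+" using a(3) by (rule trancl_rtrancl_trancl)
  then show False using a(1) unfolding acyclic_def by blast
qed

lemma add_edge:
  assumes "is_dag V D" "a\<in>V" "b\<in>V" "(b,a)\<notin>D\<^sup>*"
    "\<forall>s. (\<forall>z. (z,s)\<notin>D) \<longrightarrow> (s,a)\<in>D\<^sup>* \<longrightarrow> (s,b)\<in>D\<^sup>*"
  shows "is_dag V (insert (a,b) D) \<and> udg V (insert (a,b) D) = udg V D"
proof
  show dag: "is_dag V (insert (a,b) D)" using assms(1-4) unfolding is_dag_def by auto
  have ac: "acyclic D" "acyclic (insert (a,b) D)" using assms(1) dag unfolding is_dag_def by auto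
  have fin: "finite D" using dag_finite assms(1) .
  have key: "(\<exists>c. (c,p)\<in>(insert (a,b) D)\<^sup>* \<and> (c,q)\<in>(insert (a,b) D)\<^sup>*) \<longleftrightarrow> (\<exists>c. (c,p)\<in>D\<^sup>* \<and> (c,q)\<in>D\<^sup>*)" for p q
  proof
    assume "\<exists>c. (c,p)\<in>(insert (a,b) D)\<^sup>* \<and> (c,q)\<in>(insert (a,b) D)\<^sup>*"
    then obtain c where c: "(c,p)\<in>(insert (a,b) D)\<^sup>*" "(c,q)\<in>(insert (a,b) D)\<^sup>*" by blast
    obtain s where s: "(s,c)\<in>D\<^sup>*" "\<forall>z. (z,s)\<notin>D" using src_exists[OF fin ac(1)] by blast
    have "(s,y)\<in>D\<^sup>*" if "(c,y)\<in>(insert (a,b) D)\<^sup>*" for y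
    proof -
      from that have "(c,y)\<in>D\<^sup>* \<or> ((c,a)\<in>D\<^sup>* \<and> (b,y)\<in>D\<^sup>*)" by (simp add: rtrancl_insert)
      then show ?thesis
      proof
        assume "(c,y)\<in>D\<^sup>*" then show ?thesis using s(1) by (meson rtrancl_trans)
      next
        assume h: "(c,a)\<in>D\<^sup>* \<and> (b,y)\<in>D\<^sup>*"
        then have "(s,a)\<in>D\<^sup>*" using s(1) by (meson rtrancl_trans)
        then have "(s,b)\<in>D\<^sup>*" using assms(5) s(2) by blast
        then show ?thesis using h by (meson rtrancl_trans)
      qed
    qed
    then show "\<exists>c. (c,p)\<in>D\<^sup>* \<and> (c,q)\<in>D\<^sup>*" using c by blast
  next
    assume "\<exists>c. (c,p)\<in>D\<^sup>* \<and> (c,q)\<in>D\<^sup>*"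
    then show "\<exists>c. (c,p)\<in>(insert (a,b) D)\<^sup>* \<and> (c,q)\<in>(insert (a,b) D)\<^sup>*"
    proof -
      have "D\<^sup>* \<subseteq> (insert (a,b) D)\<^sup>*" by (rule rtrancl_mono) blast
      then show ?thesis using \<open>\<exists>c. (c,p)\<in>D\<^sup>* \<and> (c,q)\<in>D\<^sup>*\<close> by blast
    qed
  qed
  show "udg V (insert (a,b) D) = udg V D"
    unfolding udg_def using key trek_iff[OF ac(1)] trek_iff[OF ac(2)] by auto
qed

lemma cover_eq:
  assumes dag: "is_dag V D" and mc: "min_edge_clique_cover V (udg V D) E"
  shows "E = (\<lambda>s. {v\<in>V. (s,v)\<in>D\<^sup>*}) ` {s\<in>V. \<forall>z. (z,s)\<notin>D}"
proof -
  define S where "S = {s\<in>V. \<forall>z. (z,s)\<notin>D}"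
  define K where "K = (\<lambda>s. {v\<in>V. (s,v)\<in>D\<^sup>*})"
  have ac: "acyclic D" and fV: "finite V" and DV: "D \<subseteq> V\<times>V" using dag unfolding is_dag_def by auto
  have fin: "finite D" using dag_finite dag .
  let ?U = "udg V D"
  have Uc: "(p,q)\<in>?U \<longleftrightarrow> p\<in>V \<and> q\<in>V \<and> p\<noteq>q \<and> (\<exists>c. (c,p)\<in>D\<^sup>* \<and> (c,q)\<in>D\<^sup>*)" for p q
    using udg_char[OF ac] .
  have srcV: "s \<in> V" if "(s,v)\<in>D\<^sup>*" "v\<in>V" for s v
    using that DV by (metis converse_rtranclE mem_Sigma_iff subsetD)
  have has_src: "\<exists>s\<in>S. (s,v)\<in>D\<^sup>*" if "v\<in>V" for v
    using src_exists[OF fin ac, of v] srcV that unfolding S_def by blast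
  have fS: "finite S" using fV unfolding S_def by simp
  have c1: "\<forall>C\<in>K`S. is_clique V ?U C"
  proof
    fix C assume "C\<in>K`S"
    then obtain s where s: "s\<in>S" "C = K s" by blast
    show "is_clique V ?U C" unfolding is_clique_def
    proof (intro conjI ballI impI)
      show "C \<subseteq> V" using s unfolding K_def by blast
      fix a b assume ab: "a\<in>C" "b\<in>C" "a\<noteq>b"
      have "(s,a)\<in>D\<^sup>*" "(s,b)\<in>D\<^sup>*" "a\<in>V" "b\<in>V" using ab s unfolding K_def by auto
      then show "(a,b)\<in>?U" unfolding Uc using ab(3) by blast
    qed
  qed
  have c2: "\<forall>v\<in>V. \<exists>C\<in>K`S. v\<in>C"
  proof
    fix v assume v: "v\<in>V"
    then obtain s where "s\<in>S" "(s,v)\<in>D\<^sup>*" using has_src by blast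
    then have "K s \<in> K`S" "v \<in> K s" using v unfolding K_def by auto
    then show "\<exists>C\<in>K`S. v\<in>C" by blast
  qed
  have c3: "\<forall>(a,b)\<in>?U. \<exists>C\<in>K`S. a\<in>C \<and> b\<in>C"
  proof (clarify)
    fix a b assume "(a,b)\<in>?U"
    then have h: "a\<in>V \<and> b\<in>V \<and> a\<noteq>b \<and> (\<exists>c. (c,a)\<in>D\<^sup>* \<and> (c,b)\<in>D\<^sup>*)"
      by (rule Uc[THEN iffD1])
    then obtain c where c: "a\<in>V" "b\<in>V" "(c,a)\<in>D\<^sup>*" "(c,b)\<in>D\<^sup>*" by blast
    obtain s where s: "(s,c)\<in>D\<^sup>*" "\<forall>z. (z,s)\<notin>D" using src_exists[OF fin ac, of c] by blast
    have sa: "(s,a)\<in>D\<^sup>*" using s(1) c(3) by (rule rtrancl_trans)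
    have sb: "(s,b)\<in>D\<^sup>*" using s(1) c(4) by (rule rtrancl_trans)
    have "s\<in>V" using srcV[OF sa c(1)] .
    then have "s\<in>S" using s(2) unfolding S_def by blast
    then have "K s \<in> K`S" by (rule imageI)
    moreover have "a \<in> K s" "b \<in> K s" using sa sb c(1,2) unfolding K_def by auto
    ultimately show "\<exists>C\<in>K`S. a\<in>C \<and> b\<in>C" by blast
  qed
  have cover: "edge_clique_cover V ?U (K ` S)"
    unfolding edge_clique_cover_def using c1 c2 c3 by blast
  have fE: "finite E" and covE: "edge_clique_cover V ?U E" and minE: "card E \<le> card (K`S)"
    using mc cover fS unfolding min_edge_clique_cover_def by auto
  have cardKS: "card (K`S) \<le> card S" using card_image_le fS by blast
  have exC: "\<exists>C. C\<in>E \<and> s\<in>C" if "s\<in>S" for s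
    using covE that unfolding edge_clique_cover_def S_def by blast
  define Cf where "Cf s = (SOME C. C\<in>E \<and> s\<in>C)" for s
  have CfE: "Cf s \<in> E \<and> s \<in> Cf s" if "s\<in>S" for s
    unfolding Cf_def using someI_ex[OF exC[OF that]] .
  have cl_sub: "C \<subseteq> K s" if "C\<in>E" "s\<in>S" "s\<in>C" for C s
  proof
    fix v assume v: "v\<in>C"
    have cl: "is_clique V ?U C" using covE that(1) unfolding edge_clique_cover_def by blast
    then have "v\<in>V" using v unfolding is_clique_def by blast
    moreover have "(s,v)\<in>D\<^sup>*"
    proof (cases "v = s")
      case False
      then have "(s,v)\<in>?U" using cl v that(3) unfolding is_clique_def by auto
      then obtain c where "(c,s)\<in>D\<^sup>*" "(c,v)\<in>D\<^sup>*" unfolding Uc by blast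
      moreover have "\<forall>z. (z,s)\<notin>D" using that(2) unfolding S_def by blast
      ultimately show ?thesis using src_anc[of s D] by blast
    qed simp
    ultimately show "v \<in> K s" unfolding K_def by blast
  qed
  have inj: "inj_on Cf S"
  proof (rule inj_onI)
    fix s t assume st: "s\<in>S" "t\<in>S" "Cf s = Cf t"
    have "t \<in> Cf s" using CfE[OF st(2)] st(3) by simp
    moreover have "Cf s \<subseteq> K s" using cl_sub[of "Cf s" s] CfE[OF st(1)] st(1) by blast
    ultimately have "t \<in> K s" by blast
    then have "(s,t)\<in>D\<^sup>*" unfolding K_def by blast
    moreover have "\<forall>z. (z,t)\<notin>D" using st(2) unfolding S_def by blast
    ultimately show "s = t" using src_anc[of t D s] by blast
  qed
  have sub: "Cf ` S \<subseteq> E" using CfE by blast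
  have "card S \<le> card E" using card_inj_on_le[OF inj sub fE] .
  then have "card (Cf ` S) = card E" using card_image[OF inj] minE cardKS by simp
  then have ECf: "E = Cf ` S" using card_subset_eq[OF fE sub] by simp
  have "Cf s = K s" if s: "s\<in>S" for s
  proof
    show "Cf s \<subseteq> K s" using cl_sub CfE s by blast
    show "K s \<subseteq> Cf s"
    proof
      fix v assume v: "v \<in> K s"
      show "v \<in> Cf s"
      proof (cases "v = s")
        case True then show ?thesis using CfE s by blast
      next
        case False
        have sV: "s\<in>V" using s unfolding S_def by blast
        have "(s,s)\<in>D\<^sup>*" "(s,v)\<in>D\<^sup>*" "v\<in>V" using v unfolding K_def by auto
        then have "(s,v)\<in>?U" unfolding Uc using False sV by blast
        then obtain C where C: "C\<in>E" "s\<in>C" "v\<in>C" using covE unfolding edge_clique_cover_def by blast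
        then obtain t where t: "t\<in>S" "C = Cf t" using ECf by blast
        then have "t \<in> C" using CfE by blast
        then have "C \<subseteq> K t" using cl_sub[of C t] C(1) t(1) by blast
        then have "s \<in> K t" using C(2) by blast
        then have "(t,s)\<in>D\<^sup>*" unfolding K_def by blast
        moreover have "\<forall>z. (z,s)\<notin>D" using s unfolding S_def by blast
        ultimately have "t = s" using src_anc[of s D t] by blast
        then show ?thesis using C t by blast
      qed
    qed
  qed
  then have "Cf ` S = K ` S" by (rule image_cong[OF refl])
  then show ?thesis using ECf unfolding K_def S_def by simp
qed

theorem lemma5p1:
  fixes V :: "'a set" and U D :: "'a rel" and E :: "'a set set"
  assumes "uec_rep V U"
    and "maximal_in_uec V U D"
    and "min_edge_clique_cover V U E"
    and "v \<in> V" and "x \<in> V" and "w \<in> V"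
  shows "v_structure D v x w \<longleftrightarrow>
    (\<exists>C1\<in>E. \<exists>C2\<in>E. v \<in> C1 \<and> x \<in> C1 \<and> w \<notin> C1 \<and> w \<in> C2 \<and> x \<in> C2 \<and> v \<notin> C2
       \<and> (\<forall>C\<in>E. (v \<in> C \<or> w \<in> C) \<longrightarrow> x \<in> C))"
proof -
  define S where "S = {s\<in>V. \<forall>z. (z,s)\<notin>D}"
  define K where "K = (\<lambda>s. {v\<in>V. (s,v)\<in>D\<^sup>*})"
  have dag: "is_dag V D" and UD: "U = udg V D" using assms(2) unfolding maximal_in_uec_def in_uec_def by auto
  have ac: "acyclic D" and DV: "D \<subseteq> V\<times>V" using dag unfolding is_dag_def by auto
  have EK: "E = K ` S" using cover_eq[OF dag] assms(3) UD unfolding K_def S_def by simp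
  have srcV: "s \<in> V" if "(s,y)\<in>D\<^sup>*" "y\<in>V" for s y
    using that DV by (metis converse_rtranclE mem_Sigma_iff subsetD)
  have memK: "y \<in> K s \<longleftrightarrow> (s,y)\<in>D\<^sup>*" if "y\<in>V" for s y using that unfolding K_def by simp
  have maxc: "(a,b)\<in>D" if ab: "a\<in>V" "b\<in>V" "(b,a)\<notin>D\<^sup>*" "\<forall>s\<in>S. (s,a)\<in>D\<^sup>* \<longrightarrow> (s,b)\<in>D\<^sup>*" for a b
  proof (rule ccontr)
    assume nab: "(a,b)\<notin>D"
    have "a \<noteq> b" using ab(3) by auto
    have "\<forall>s. (\<forall>z. (z,s)\<notin>D) \<longrightarrow> (s,a)\<in>D\<^sup>* \<longrightarrow> (s,b)\<in>D\<^sup>*"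
      using ab(4) srcV ab(1) unfolding S_def by blast
    then have "is_dag V (insert (a,b) D) \<and> udg V (insert (a,b) D) = udg V D"
      using add_edge[OF dag ab(1-3)] by blast
    then have "in_uec V U (insert (a,b) D)" unfolding in_uec_def UD by blast
    then show False using assms(2) ab(1,2) \<open>a\<noteq>b\<close> nab \<open>is_dag V (insert (a,b) D) \<and> _\<close>
      unfolding maximal_in_uec_def by blast
  qed
  show ?thesis
  proof
    assume vs: "v_structure D v x w"
    then have vw: "v \<noteq> w" "(v,x)\<in>D" "(w,x)\<in>D" "(v,w)\<notin>D" "(w,v)\<notin>D"
      unfolding v_structure_def adjD_def by auto
    have ex: "\<exists>s\<in>S. (s,a)\<in>D\<^sup>* \<and> (s,b)\<notin>D\<^sup>*"
      if ab: "a\<in>V" "b\<in>V" "a\<noteq>b" "(a,b)\<notin>D" "(b,a)\<notin>D" for a b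
    proof (rule ccontr)
      assume "\<not> ?thesis"
      then have h: "\<forall>s\<in>S. (s,a)\<in>D\<^sup>* \<longrightarrow> (s,b)\<in>D\<^sup>*" by blast
      show False
      proof (cases "(b,a)\<in>D\<^sup>*")
        case False
        then show False using maxc[OF ab(1,2) False h] ab(4) by blast
      next
        case True
        have "(a,b)\<notin>D\<^sup>*" using acyc_rt_antisym[OF ac _ True] ab(3) by blast
        moreover have "\<forall>s\<in>S. (s,b)\<in>D\<^sup>* \<longrightarrow> (s,a)\<in>D\<^sup>*" using True by (meson rtrancl_trans)
        ultimately show False using maxc[OF ab(2,1)] ab(5) by blast
      qed
    qed
    obtain s1 where s1: "s1\<in>S" "(s1,v)\<in>D\<^sup>*" "(s1,w)\<notin>D\<^sup>*" using ex[OF assms(4,6) vw(1,4,5)] by blast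
    obtain s2 where s2: "s2\<in>S" "(s2,w)\<in>D\<^sup>*" "(s2,v)\<notin>D\<^sup>*" using ex[OF assms(6,4) _ vw(5,4)] vw(1) by metis
    have x1: "(s1,x)\<in>D\<^sup>*" "(s2,x)\<in>D\<^sup>*" using s1 s2 vw by (meson rtrancl_into_rtrancl)+
    have all: "\<forall>C\<in>E. (v \<in> C \<or> w \<in> C) \<longrightarrow> x \<in> C"
    proof
      fix C assume "C\<in>E"
      then obtain s where "C = K s" using EK by blast
      then show "(v \<in> C \<or> w \<in> C) \<longrightarrow> x \<in> C"
        unfolding K_def using assms(5) vw(2,3) by (auto intro: rtrancl_into_rtrancl)
    qed
    show "\<exists>C1\<in>E. \<exists>C2\<in>E. v \<in> C1 \<and> x \<in> C1 \<and> w \<notin> C1 \<and> w \<in> C2 \<and> x \<in> C2 \<and> v \<notin> C2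
       \<and> (\<forall>C\<in>E. (v \<in> C \<or> w \<in> C) \<longrightarrow> x \<in> C)"
    proof (rule bexI[of _ "K s1"], rule bexI[of _ "K s2"])
      show "K s1 \<in> E" "K s2 \<in> E" using EK s1(1) s2(1) by auto
      show "v \<in> K s1 \<and> x \<in> K s1 \<and> w \<notin> K s1 \<and> w \<in> K s2 \<and> x \<in> K s2 \<and> v \<notin> K s2
       \<and> (\<forall>C\<in>E. (v \<in> C \<or> w \<in> C) \<longrightarrow> x \<in> C)"
        using all assms(4-6) s1(2,3) s2(2,3) x1 unfolding K_def by blast
    qed
  next
    assume "\<exists>C1\<in>E. \<exists>C2\<in>E. v \<in> C1 \<and> x \<in> C1 \<and> w \<notin> C1 \<and> w \<in> C2 \<and> x \<in> C2 \<and> v \<notin> C2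
       \<and> (\<forall>C\<in>E. (v \<in> C \<or> w \<in> C) \<longrightarrow> x \<in> C)"
    then obtain C1 C2 where C: "C1\<in>E" "C2\<in>E" "v \<in> C1" "x \<in> C1" "w \<notin> C1"
      "w \<in> C2" "x \<in> C2" "v \<notin> C2" and allC: "\<forall>C\<in>E. (v \<in> C \<or> w \<in> C) \<longrightarrow> x \<in> C"
      by blast
    obtain s1 where s1: "s1\<in>S" "C1 = K s1" using C(1) EK by blast
    obtain s2 where s2: "s2\<in>S" "C2 = K s2" using C(2) EK by blast
    have all: "\<forall>s\<in>S. (v \<in> K s \<or> w \<in> K s) \<longrightarrow> x \<in> K s"
      using allC EK by blast
    have s: "s1\<in>S" "s2\<in>S" "v \<in> K s1" "x \<in> K s1" "w \<notin> K s1"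
      "w \<in> K s2" "x \<in> K s2" "v \<notin> K s2" using C s1 s2 by auto
    have r: "(s1,v)\<in>D\<^sup>*" "(s1,x)\<in>D\<^sup>*" "(s1,w)\<notin>D\<^sup>*" "(s2,w)\<in>D\<^sup>*" "(s2,x)\<in>D\<^sup>*" "(s2,v)\<notin>D\<^sup>*"
      using s assms(4-6) unfolding K_def by auto
    have allr: "\<forall>s\<in>S. ((s,v)\<in>D\<^sup>* \<or> (s,w)\<in>D\<^sup>*) \<longrightarrow> (s,x)\<in>D\<^sup>*"
      using all assms(4-6) unfolding K_def by auto
    have xv: "(x,v)\<notin>D\<^sup>*" using r(5,6) by (meson rtrancl_trans)
    have xw: "(x,w)\<notin>D\<^sup>*" using r(2,3) by (meson rtrancl_trans)
    have vx: "(v,x)\<in>D" using maxc[OF assms(4,5) xv] allr by blast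
    have wx: "(w,x)\<in>D" using maxc[OF assms(6,5) xw] allr by blast
    have "v \<noteq> w" using r(1,3) by blast
    moreover have "(v,w)\<notin>D" using r(1,3) by (meson rtrancl_into_rtrancl)
    moreover have "(w,v)\<notin>D" using r(4,6) by (meson rtrancl_into_rtrancl)
    ultimately show "v_structure D v x w" using vx wx unfolding v_structure_def adjD_def by blast
  qed
qed

end
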